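(* Let $F$ be a 3-SAT formula over variables $x_1,\dots,x_p$ with clauses $C_1,\dots,C_c$, and $A$ a partial assignment on $x_1,\dots,x_p$. Let $$X = \begin{bmatrix} 0 & 1 & 1\\ E(C_1) & 0 & 1\\ \vdots&\vdots&\vdots\\ E(C_c) & 0 & 1\\ E(A) & 0 & 1\end{bmatrix}\in\mathbb{R}^{(c+2)\times(2p+2)}$$ (the first row has the zero vector in its first $2p$ entries). Then there exist: (i) a saturated attention head with parameters $\Gamma_s^{A\models F}$ and output dimension $1$ such that $\operatorname{SaturatedAttn}(X;\Gamma_s^{A\models F})_{c+2} = \mathbf{1}_{A\models F}$; (ii) a saturated attention head with parameters $\Gamma_s^{F\models\lnot A}$ and output dimension $1$ such that $\operatorname{SaturatedAttn}(X;\Gamma_s^{F\models\lnot A})_{c+2} = \mathbf{1}_{F\models\lnot A}$; (iii) a saturated attention head with parameters $\Gamma_s^{D}$ and output dimension $2p$, and an MLP layer with ReGLU activation and parameters $\Gamma^D_{MLP}$, such that $\operatorname{MLP}\big([\operatorname{SaturatedAttn}(X;\Gamma_s^D);X];\Gamma^D_{MLP}\big)_{c+2} = E(D)$ whenever $F\not\models\lnot A$, where $D=\{\ell\in L\mid F\land A\models_1\ell\}$. The parameters depend only on $p$ and $c$, not on $F$ or $A$.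
   Context: Literals $L = \{x_1,\lnot x_1,\dots,x_p,\lnot x_p\}$; clauses and partial assignments are subsets of $L$ not containing both $x_v$ and $\lnot x_v$; a clause is the disjunction of its literals and a partial assignment sets $x_v$ true if $x_v\in A$, false if $\lnot x_v\in A$. $E(B)\in\{0,1\}^{2p}$ has $E(B)_v = \mathbf{1}_{x_v\in B}$, $E(B)_{v+p} = \mathbf{1}_{\lnot x_v\in B}$. $A\models F$: every clause contains a literal of $A$. $F\models\lnot A$: some clause has all its literals' negations in $A$. $F\land A\models_1\ell$: some clause not satisfied by $A$ becomes exactly $\{\ell\}$ after deleting literals whose negations are in $A$. Saturated masked attention with weights $\Gamma_s=(W_Q,W_K,W_V)$: let $\mathbf{A} = XW_Q(XW_K)^\top$, $\mathcal{M}_i = \{j\le i \mid \mathbf{A}_{ij} = \max_{k\le i}\mathbf{A}_{ik}\}$, and $\operatorname{SaturatedAttn}(X;\Gamma_s)_i = \frac{1}{|\mathcal{M}_i|}\sum_{j\in\mathcal{M}_i} X_jW_V$. An MLP layer with ReGLU activation computes $x\mapsto W_2[(W_1x+b_1)\otimes\operatorname{ReLU}(Vx+b_2)]+b$ at each position; $[\cdot;\cdot]$ denotes rowwise concatenation. *)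

theory Defs
  imports "Jordan_Normal_Form.Matrix"
begin

text \<open>Variables x_1..x_p are encoded by indices 0..p-1. A literal is a pair (v, b):
  (v, True) is x_{v+1}, (v, False) is its negation.\<close>

type_synonym lit = "nat \<times> bool"

definition lits :: "nat \<Rightarrow> lit set" where
  "lits p = {0..<p} \<times> UNIV"

definition neg_lit :: "lit \<Rightarrow> lit" where
  "neg_lit l = (fst l, \<not> snd l)"

definition wf_litset :: "nat \<Rightarrow> lit set \<Rightarrow> bool" where
  "wf_litset p B \<longleftrightarrow> B \<subseteq> lits p \<and> (\<forall>v. \<not> ((v, True) \<in> B \<and> (v, False) \<in> B))"

definition clause3 :: "nat \<Rightarrow> lit set \<Rightarrow> bool" where
  "clause3 p C \<longleftrightarrow> wf_litset p C \<and> card C = 3"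

definition sat_models :: "lit set \<Rightarrow> lit set list \<Rightarrow> bool" where
  "sat_models A F \<longleftrightarrow> (\<forall>C\<in>set F. \<exists>l\<in>C. l \<in> A)"

definition refutes :: "lit set list \<Rightarrow> lit set \<Rightarrow> bool" where
  "refutes F A \<longleftrightarrow> (\<exists>C\<in>set F. \<forall>l\<in>C. neg_lit l \<in> A)"

definition unit_implies :: "lit set list \<Rightarrow> lit set \<Rightarrow> lit \<Rightarrow> bool" where
  "unit_implies F A l \<longleftrightarrow>
     (\<exists>C\<in>set F. \<not> (\<exists>l'\<in>C. l' \<in> A) \<and> {l'\<in>C. neg_lit l' \<notin> A} = {l})"

text \<open>Encoding E(B) in {0,1}^{2p}: entry v (0-based, v<p) is 1 iff x_v in B,
  entry v+p is 1 iff not x_v in B.\<close>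
definition enc :: "nat \<Rightarrow> lit set \<Rightarrow> real vec" where
  "enc p B = vec (2 * p) (\<lambda>k. if k < p then (if (k, True) \<in> B then 1 else 0)
                                        else (if (k - p, False) \<in> B then 1 else 0))"

text \<open>The input matrix X in R^{(c+2) x (2p+2)} (rows 0-based: row 0 is [0,1,1],
  rows 1..c are [E(C_i),0,1], row c+1 is [E(A),0,1]).\<close>
definition inputX :: "nat \<Rightarrow> lit set list \<Rightarrow> lit set \<Rightarrow> real mat" where
  "inputX p F A = mat (length F + 2) (2 * p + 2) (\<lambda>(i, j).
      if i = 0 then (if j < 2 * p then 0 else 1)
      else if j = 2 * p then 0
      else if j = 2 * p + 1 then 1
      else if i \<le> length F then enc p (F ! (i - 1)) $ j
      else enc p A $ j)"

definition sat_attn :: "real mat \<Rightarrow> real mat \<Rightarrow> real mat \<Rightarrow> real mat \<Rightarrow> real mat" where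
  "sat_attn X WQ WK WV =
    (let S = (X * WQ) * transpose_mat (X * WK);
         Vm = X * WV;
         M = (\<lambda>i. {j. j \<le> i \<and> S $$ (i, j) = Max {S $$ (i, k) | k. k \<le> i}})
     in mat (dim_row X) (dim_col WV)
          (\<lambda>(i, l). (\<Sum>j\<in>M i. Vm $$ (j, l)) / real (card (M i))))"

definition hconcat :: "real mat \<Rightarrow> real mat \<Rightarrow> real mat" where
  "hconcat A B = mat (dim_row A) (dim_col A + dim_col B)
     (\<lambda>(i, j). if j < dim_col A then A $$ (i, j) else B $$ (i, j - dim_col A))"

definition reglu_mlp :: "real mat \<Rightarrow> real vec \<Rightarrow> real mat \<Rightarrow> real vec \<Rightarrow> real mat \<Rightarrow> real vec
    \<Rightarrow> real vec \<Rightarrow> real vec" where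
  "reglu_mlp W1 b1 Vg b2 W2 b x =
     W2 *\<^sub>v vec (dim_row W1) (\<lambda>k. (W1 *\<^sub>v x + b1) $ k * max 0 ((Vg *\<^sub>v x + b2) $ k)) + b"

end

theory Submission
  imports Defs
begin


lemma mult_entry:
  assumes "X \<in> carrier_mat n m" "W \<in> carrier_mat m d" "i < n" "j < d"
  shows "(X * W) $$ (i,j) = (\<Sum>t<m. X $$ (i,t) * W $$ (t,j))"
  using assms by (auto simp: scalar_prod_def atLeast0LessThan intro!: sum.cong)

lemma sel:
  fixes s :: "nat \<Rightarrow> real"
  assumes "T \<subseteq> {..i}" "T \<noteq> {}" "\<And>j. j \<in> T \<Longrightarrow> s j = tv" "\<And>j. j \<le> i \<Longrightarrow> j \<notin> T \<Longrightarrow> s j < tv"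
  shows "Max {s k | k. k \<le> i} = tv" "{j. j \<le> i \<and> s j = Max {s k | k. k \<le> i}} = T"
proof -
  have fin: "finite {s k | k. k \<le> i}" by simp
  obtain j0 where j0: "j0 \<in> T" using assms(2) by auto
  have "tv \<in> {s k | k. k \<le> i}" using j0 assms(1,3) by force
  moreover have "\<forall>x\<in>{s k | k. k \<le> i}. x \<le> tv"
  proof
    fix x assume "x \<in> {s k | k. k \<le> i}"
    then obtain k where "k \<le> i" "x = s k" by auto
    then show "x \<le> tv" using assms(3,4) by (cases "k \<in> T") force+
  qed
  ultimately show M: "Max {s k | k. k \<le> i} = tv" using fin by (meson Max_eqI)
  show "{j. j \<le> i \<and> s j = Max {s k | k. k \<le> i}} = T" unfolding M
  proof (rule Set.set_eqI)
    fix j show "j \<in> {j. j \<le> i \<and> s j = tv} \<longleftrightarrow> j \<in> T"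
      using assms(1,3,4) by (cases "j \<in> T") force+
  qed
qed

lemma sat_attn_sel:
  fixes s :: "nat \<Rightarrow> real"
  assumes X: "X \<in> carrier_mat n m" and WQ: "WQ \<in> carrier_mat m m" and WV: "WV \<in> carrier_mat m e"
    and i: "i < n" and l: "l < e"
    and sc: "\<And>j. j \<le> i \<Longrightarrow> (\<Sum>k<m. (\<Sum>t<m. X$$(i,t) * WQ$$(t,k)) * X$$(j,k)) = s j"
    and T: "T \<subseteq> {..i}" "T \<noteq> {}" "\<And>j. j \<in> T \<Longrightarrow> s j = tv"
      "\<And>j. j \<le> i \<Longrightarrow> j \<notin> T \<Longrightarrow> s j < tv"
  shows "sat_attn X WQ (1\<^sub>m m) WV $$ (i,l) = (\<Sum>j\<in>T. \<Sum>t<m. X$$(j,t) * WV$$(t,l)) / real (card T)"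
proof -
  let ?S = "(X * WQ) * transpose_mat (X * 1\<^sub>m m)"
  have XW: "X * 1\<^sub>m m = X" using X by simp
  have Sij: "?S $$ (i,j) = s j" if "j \<le> i" for j
  proof -
    have j: "j < n" using that i by simp
    have "?S $$ (i,j) = (\<Sum>k<m. (X*WQ)$$(i,k) * transpose_mat X $$ (k,j))" unfolding XW
      by (rule mult_entry[of _ n m _ n]) (use X WQ i j in auto)
    also have "\<dots> = (\<Sum>k<m. (\<Sum>t<m. X$$(i,t) * WQ$$(t,k)) * X$$(j,k))"
      using X WQ i j by (intro sum.cong refl) (simp add: scalar_prod_def atLeast0LessThan)
    finally show ?thesis using sc that by simp
  qed
  have set1: "{?S $$ (i,k) | k. k \<le> i} = {s k | k. k \<le> i}" using Sij by metis
  have M: "{j. j \<le> i \<and> ?S $$ (i,j) = Max {?S $$ (i,k) | k. k \<le> i}} = T"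
  proof -
    have "{j. j \<le> i \<and> ?S $$ (i,j) = Max {?S $$ (i,k) | k. k \<le> i}}
        = {j. j \<le> i \<and> s j = Max {s k | k. k \<le> i}}"
      unfolding set1 using Sij by (intro Collect_cong) auto
    then show ?thesis using sel(2)[OF T] by simp
  qed
  have "sat_attn X WQ (1\<^sub>m m) WV $$ (i,l) = (\<Sum>j\<in>T. (X*WV)$$(j,l)) / real (card T)"
  proof -
    have M': "{j. j \<le> i \<and> (X * WQ * transpose_mat X) $$ (i,j) = Max {(X * WQ * transpose_mat X) $$ (i,k) | k. k \<le> i}} = T"
      using M unfolding XW .
    show ?thesis unfolding sat_attn_def Let_def using X WV i l by (simp add: M')
  qed
  also have "\<dots> = (\<Sum>j\<in>T. \<Sum>t<m. X$$(j,t) * WV$$(t,l)) / real (card T)"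
    using T(1) i l by (intro arg_cong[where f="\<lambda>x. x / _"] sum.cong refl mult_entry[OF X WV]) auto
  finally show ?thesis .
qed

definition litof :: "nat \<Rightarrow> nat \<Rightarrow> lit" where
  "litof p k = (if k < p then (k, True) else (k - p, False))"

definition swp :: "nat \<Rightarrow> nat \<Rightarrow> nat" where
  "swp p k = (if k < p then k + p else k - p)"

definition rowset :: "lit set list \<Rightarrow> lit set \<Rightarrow> nat \<Rightarrow> lit set" where
  "rowset F A j = (if j = 0 then {} else if j \<le> length F then F ! (j - 1) else A)"

definition Mq :: "nat \<Rightarrow> real \<Rightarrow> real \<Rightarrow> real \<Rightarrow> real \<Rightarrow> real mat" where
  "Mq p \<alpha> \<delta> \<beta> \<gamma> = mat (2*p+2) (2*p+2) (\<lambda>(l,k).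
     if k < 2*p then (if l < 2*p then (if l = k then \<alpha> else 0) + (if l = swp p k then \<delta> else 0)
                      else if l = 2*p+1 then \<beta> else 0)
     else if k = 2*p \<and> l = 2*p+1 then \<gamma> else 0)"

lemma enc_idx: "k < 2*p \<Longrightarrow> enc p B $ k = of_bool (litof p k \<in> B)"
  unfolding enc_def litof_def by simp

lemma swp_lt: "k < 2*p \<Longrightarrow> swp p k < 2*p"
  by (auto simp: swp_def)

lemma litof_swp: "k < 2*p \<Longrightarrow> litof p (swp p k) = neg_lit (litof p k)"
  by (auto simp: swp_def litof_def neg_lit_def)

lemma swp_neq: "k < 2*p \<Longrightarrow> swp p k \<noteq> k"
  by (auto simp: swp_def)

lemma bij_litof: "bij_betw (litof p) {..<2*p} (lits p)"
  by (rule bij_betw_byWitness[where f'="\<lambda>(v,b). if b then v else v+p"])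
     (auto simp: litof_def lits_def)

lemma litof_in: "k < 2*p \<Longrightarrow> litof p k \<in> lits p"
  using bij_litof[of p] by (auto simp: bij_betw_def)

lemma fin_lits: "finite (lits p)" unfolding lits_def by simp

lemma sum_lit:
  assumes "B \<subseteq> lits p"
  shows "(\<Sum>k<2*p. g (litof p k) * of_bool (litof p k \<in> B)) = (\<Sum>l\<in>B. (g l :: real))"
proof -
  have "(\<Sum>k<2*p. g (litof p k) * of_bool (litof p k \<in> B))
      = (\<Sum>l\<in>lits p. g l * of_bool (l \<in> B))"
    by (rule sum.reindex_bij_betw[OF bij_litof, where g="\<lambda>l. g l * of_bool (l \<in> B)"])
  also have "\<dots> = (\<Sum>l\<in>lits p \<inter> {l. l \<in> B}. g l)"
    using fin_lits by simp
  also have "lits p \<inter> {l. l \<in> B} = B" using assms by auto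
  finally show ?thesis .
qed

lemma sum_g:
  assumes "finite E"
  shows "(\<Sum>l\<in>E. \<alpha> * of_bool (l \<in> A) + \<delta> * of_bool (neg_lit l \<in> A) + (\<beta>::real))
     = \<alpha> * card (E \<inter> A) + \<delta> * card {l\<in>E. neg_lit l \<in> A} + \<beta> * card E"
proof -
  have "(\<Sum>l\<in>E. \<alpha> * of_bool (l \<in> A) + \<delta> * of_bool (neg_lit l \<in> A) + \<beta>)
     = \<alpha> * (\<Sum>l\<in>E. of_bool (l \<in> A)) + \<delta> * (\<Sum>l\<in>E. of_bool (neg_lit l \<in> A)) + \<beta> * card E"
    by (simp add: sum.distrib sum_distrib_left)
  also have "\<dots> = \<alpha> * card (E \<inter> A) + \<delta> * card {l\<in>E. neg_lit l \<in> A} + \<beta> * card E"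
    using assms by (simp add: Int_def Collect_conj_eq[symmetric])
  finally show ?thesis .
qed

lemma X_carrier: "length F = c \<Longrightarrow> inputX p F A \<in> carrier_mat (c+2) (2*p+2)"
  unfolding inputX_def by simp

lemma X_entry:
  assumes "j < length F + 2" "k < 2*p+2"
  shows "inputX p F A $$ (j,k) = (if k < 2*p then of_bool (litof p k \<in> rowset F A j)
            else if k = 2*p then of_bool (j = 0) else 1)"
  using assms unfolding inputX_def rowset_def by (auto simp: enc_idx)

lemma sum_split2: fixes p :: nat and f :: "nat \<Rightarrow> real" shows "(\<Sum>t<2*p+2. f t) = (\<Sum>t<2*p. f t) + f (2*p) + (f (2*p+1) :: real)"
proof -
  have "2*p+2 = Suc (Suc (2*p))" by simp
  then show ?thesis by (simp only: sum.lessThan_Suc) simp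
qed

lemma sum_two:
  fixes n :: nat
  assumes "k < n" "q < n" "k \<noteq> q"
  shows "(\<Sum>t<n. (if t = k then a else if t = q then b else 0) * f t) = a * f k + b * (f q :: real)"
proof -
  have "(\<Sum>t<n. (if t = k then a else if t = q then b else 0) * f t)
     = (\<Sum>t<n. (if t = k then a * f k else 0) + (if t = q then b * f q else 0))"
    using assms by (intro sum.cong) auto
  also have "\<dots> = a * f k + b * f q" using assms by (simp add: sum.distrib sum.delta)
  finally show ?thesis .
qed

lemma qvec:
  assumes "length F = c" "k < 2*p+2"
  shows "(\<Sum>t<2*p+2. inputX p F A $$ (c+1,t) * Mq p \<alpha> \<delta> \<beta> \<gamma> $$ (t,k))
    = (if k < 2*p then \<alpha> * of_bool (litof p k \<in> A) + \<delta> * of_bool (neg_lit (litof p k) \<in> A) + \<beta>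
       else if k = 2*p then \<gamma> else 0)"
proof -
  let ?X = "inputX p F A"
  have Xr: "?X $$ (c+1,t) = (if t < 2*p then of_bool (litof p t \<in> A)
            else if t = 2*p then 0 else 1)" if "t < 2*p+2" for t
    using X_entry[of "c+1" F t p A] that assms by (simp add: rowset_def)
  have "(\<Sum>t<2*p+2. ?X $$ (c+1,t) * Mq p \<alpha> \<delta> \<beta> \<gamma> $$ (t,k))
     = (\<Sum>t<2*p. ?X $$ (c+1,t) * Mq p \<alpha> \<delta> \<beta> \<gamma> $$ (t,k)) + (if k < 2*p then \<beta> else if k = 2*p then \<gamma> else 0)"
  proof -
    have a: "?X $$ (c+1,2*p) = 0" "?X $$ (c+1,2*p+1) = 1" using Xr[of "2*p"] Xr[of "2*p+1"] by simp_all
    show ?thesis unfolding sum_split2 a using assms by (simp add: Mq_def)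
  qed
  also have "(\<Sum>t<2*p. ?X $$ (c+1,t) * Mq p \<alpha> \<delta> \<beta> \<gamma> $$ (t,k))
     = (if k < 2*p then \<alpha> * of_bool (litof p k \<in> A) + \<delta> * of_bool (neg_lit (litof p k) \<in> A) else 0)"
  proof (cases "k < 2*p")
    case True
    have "(\<Sum>t<2*p. ?X $$ (c+1,t) * Mq p \<alpha> \<delta> \<beta> \<gamma> $$ (t,k))
       = (\<Sum>t<2*p. (if t = k then \<alpha> else if t = swp p k then \<delta> else 0) * of_bool (litof p t \<in> A))"
      using True swp_neq[OF True] assms Xr by (intro sum.cong refl) (auto simp: Mq_def)
    also have "\<dots> = \<alpha> * of_bool (litof p k \<in> A) + \<delta> * of_bool (neg_lit (litof p k) \<in> A)"
      using True swp_neq[OF True] by (subst sum_two) (auto simp: swp_lt litof_swp)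
    finally show ?thesis using True by simp
  next
    case False
    then show ?thesis using assms by (auto simp: Xr Mq_def intro!: sum.neutral)
  qed
  finally show ?thesis by simp
qed

lemma score:
  assumes c: "length F = c" and j: "j \<le> c+1" and E: "rowset F A j \<subseteq> lits p"
  shows "(\<Sum>k<2*p+2. (\<Sum>t<2*p+2. inputX p F A $$ (c+1,t) * Mq p \<alpha> \<delta> \<beta> \<gamma> $$ (t,k)) * inputX p F A $$ (j,k))
    = \<alpha> * card (rowset F A j \<inter> A) + \<delta> * card {l\<in>rowset F A j. neg_lit l \<in> A}
      + \<beta> * card (rowset F A j) + \<gamma> * of_bool (j = 0)"
proof -
  let ?E = "rowset F A j"
  let ?g = "\<lambda>l. \<alpha> * of_bool (l \<in> A) + \<delta> * of_bool (neg_lit l \<in> A) + \<beta>"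
  have jl: "j < length F + 2" using j c by simp
  have "(\<Sum>k<2*p+2. (\<Sum>t<2*p+2. inputX p F A $$ (c+1,t) * Mq p \<alpha> \<delta> \<beta> \<gamma> $$ (t,k)) * inputX p F A $$ (j,k))
     = (\<Sum>k<2*p+2. (if k < 2*p then ?g (litof p k) else if k = 2*p then \<gamma> else 0) * inputX p F A $$ (j,k))"
    by (intro sum.cong refl, subst qvec[OF c]) auto
  also have "\<dots> = (\<Sum>k<2*p. ?g (litof p k) * of_bool (litof p k \<in> ?E)) + \<gamma> * of_bool (j = 0)"
    unfolding sum_split2 using jl by (simp add: X_entry)
  also have "\<dots> = (\<Sum>l\<in>?E. ?g l) + \<gamma> * of_bool (j = 0)"
    using sum_lit[OF E, of ?g] by simp
  also have "\<dots> = \<alpha> * card (?E \<inter> A) + \<delta> * card {l\<in>?E. neg_lit l \<in> A}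
      + \<beta> * card ?E + \<gamma> * of_bool (j = 0)"
    using sum_g[of ?E \<alpha> A \<delta> \<beta>] finite_subset[OF E fin_lits] by simp
  finally show ?thesis .
qed

lemma Mq_carrier: "Mq p \<alpha> \<delta> \<beta> \<gamma> \<in> carrier_mat (2*p+2) (2*p+2)"
  unfolding Mq_def by simp

lemma rowset_sub:
  assumes "length F = c" "\<forall>C\<in>set F. clause3 p C" "wf_litset p A"
  shows "rowset F A j \<subseteq> lits p"
proof (cases "j = 0 \<or> j > length F")
  case True then show ?thesis using assms(3) unfolding rowset_def wf_litset_def by auto
next
  case False
  then have "F ! (j - 1) \<in> set F" by (intro nth_mem) linarith
  then have "clause3 p (F ! (j - 1))" using assms(2) by blast
  then show ?thesis using False unfolding rowset_def clause3_def wf_litset_def by auto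
qed

lemma rowset_card:
  assumes "length F = c" "\<forall>C\<in>set F. clause3 p C" "1 \<le> j" "j \<le> c"
  shows "card (rowset F A j) = 3"
  using assms unfolding rowset_def clause3_def by (auto simp: nth_mem)

lemma rowset_0[simp]: "rowset F A 0 = {}"
  unfolding rowset_def by simp

lemma rowset_last: "length F = c \<Longrightarrow> rowset F A (c+1) = A"
  unfolding rowset_def by simp

lemma in_set_rowset:
  assumes "length F = c"
  shows "C \<in> set F \<longleftrightarrow> (\<exists>j. 1 \<le> j \<and> j \<le> c \<and> C = rowset F A j)"
proof
  assume "C \<in> set F"
  then obtain i where "i < length F" "F ! i = C" by (auto simp: in_set_conv_nth)
  then show "\<exists>j. 1 \<le> j \<and> j \<le> c \<and> C = rowset F A j"
    using assms by (intro exI[of _ "i+1"]) (auto simp: rowset_def)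
next
  assume "\<exists>j. 1 \<le> j \<and> j \<le> c \<and> C = rowset F A j"
  then obtain j where "1 \<le> j" "j \<le> c" "C = rowset F A j" by auto
  then show "C \<in> set F" using assms by (auto simp: rowset_def nth_mem)
qed

lemma wf_neg_empty: assumes "wf_litset p A" shows "{l\<in>A. neg_lit l \<in> A} = {}"
proof -
  have False if "(v,b) \<in> A" "(v, \<not> b) \<in> A" for v b
    using that assms unfolding wf_litset_def by (cases b) auto
  then show ?thesis unfolding neg_lit_def by fastforce
qed

lemma fin_A: "wf_litset p A \<Longrightarrow> finite A"
  unfolding wf_litset_def using fin_lits finite_subset by blast


definition V1 :: "nat \<Rightarrow> real mat" where
  "V1 p = mat (2*p+2) 1 (\<lambda>(t,l). if t = 2*p then 1 else 0)"

lemma part1: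
  assumes c: "length F = c" and cl: "\<forall>C\<in>set F. clause3 p C" and wA: "wf_litset p A"
  shows "sat_attn (inputX p F A) (Mq p (-2) 0 1 2) (1\<^sub>m (2*p+2)) (V1 p) $$ (c+1, 0)
     = (if sat_models A F then 1 else 0)"
proof -
  let ?X = "inputX p F A"
  let ?E = "rowset F A"
  define s where "s = (\<lambda>j. (-2) * real (card (?E j \<inter> A)) + 0 * real (card {l\<in>?E j. neg_lit l \<in> A})
      + 1 * real (card (?E j)) + 2 * of_bool (j = 0))"
  have sc: "(\<Sum>k<2*p+2. (\<Sum>t<2*p+2. ?X $$ (c+1,t) * Mq p (-2) 0 1 2 $$ (t,k)) * ?X $$ (j,k)) = s j"
    if "j \<le> c+1" for j
    unfolding s_def by (rule score[OF c that rowset_sub[OF c cl wA]])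
  have val: "(\<Sum>t<2*p+2. ?X $$ (j,t) * V1 p $$ (t,0)) = of_bool (j = 0)" if "j \<le> c+1" for j
    using that c unfolding sum_split2 by (simp add: X_entry V1_def)
  have s0: "s 0 = 2" unfolding s_def by simp
  have sA: "s (c+1) \<le> 0" unfolding s_def using rowset_last[OF c] by simp
  have sC: "s j = 3 - 2 * real (card (?E j \<inter> A))" if "1 \<le> j" "j \<le> c" for j
    unfolding s_def using rowset_card[OF c cl that] that by simp
  have finE: "finite (?E j)" for j using rowset_sub[OF c cl wA] finite_subset fin_lits by blast
  have sC1: "s j \<le> 1" if "1 \<le> j" "j \<le> c" "?E j \<inter> A \<noteq> {}" for j
  proof -
    have "card (?E j \<inter> A) > 0" using that finE[of j] by (simp add: card_gt_0_iff)
    then show ?thesis using sC[OF that(1,2)] by simp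
  qed
  have sat_iff: "sat_models A F \<longleftrightarrow> (\<forall>j. 1 \<le> j \<and> j \<le> c \<longrightarrow> ?E j \<inter> A \<noteq> {})"
      proof
    assume H: "sat_models A F"
    show "\<forall>j. 1 \<le> j \<and> j \<le> c \<longrightarrow> ?E j \<inter> A \<noteq> {}"
    proof (intro allI impI)
      fix j assume "1 \<le> j \<and> j \<le> c"
      then have "?E j \<in> set F" using in_set_rowset[OF c, of "?E j" A] by blast
      then show "?E j \<inter> A \<noteq> {}" using H unfolding sat_models_def by blast
    qed
  next
    assume H: "\<forall>j. 1 \<le> j \<and> j \<le> c \<longrightarrow> ?E j \<inter> A \<noteq> {}"
    show "sat_models A F" unfolding sat_models_def
    proof
      fix C assume "C \<in> set F"
      then obtain j where "1 \<le> j" "j \<le> c" "C = ?E j" using in_set_rowset[OF c, of C A] by blast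
      then show "\<exists>l\<in>C. l \<in> A" using H by blast
    qed
  qed
  have XC: "?X \<in> carrier_mat (c+2) (2*p+2)" by (rule X_carrier[OF c])
  have VC: "V1 p \<in> carrier_mat (2*p+2) 1" unfolding V1_def by simp
  show ?thesis
  proof (cases "sat_models A F")
    case True
    have "sat_attn ?X (Mq p (-2) 0 1 2) (1\<^sub>m (2*p+2)) (V1 p) $$ (c+1, 0)
       = (\<Sum>j\<in>{0}. \<Sum>t<2*p+2. ?X $$ (j,t) * V1 p $$ (t,0)) / real (card {0::nat})"
    proof (rule sat_attn_sel[OF XC Mq_carrier VC _ _ sc, where tv=2])
      fix j assume j: "j \<le> c+1" "j \<notin> {0}"
      show "s j < 2"
      proof (cases "j = c+1")
        case True then show ?thesis using sA by simp
      next
        case False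
        then have "1 \<le> j" "j \<le> c" using j by auto
        moreover have "?E j \<inter> A \<noteq> {}" using sat_iff True \<open>1 \<le> j\<close> \<open>j \<le> c\<close> by blast
        ultimately show ?thesis using sC1[of j] by simp
      qed
    qed (auto simp: s0)
    then show ?thesis using True val[of 0] by simp
  next
    case False
    define T where "T = {j. 1 \<le> j \<and> j \<le> c \<and> ?E j \<inter> A = {}}"
    have Tne: "T \<noteq> {}" using False sat_iff unfolding T_def by auto
    have "sat_attn ?X (Mq p (-2) 0 1 2) (1\<^sub>m (2*p+2)) (V1 p) $$ (c+1, 0)
       = (\<Sum>j\<in>T. \<Sum>t<2*p+2. ?X $$ (j,t) * V1 p $$ (t,0)) / real (card T)"
    proof (rule sat_attn_sel[OF XC Mq_carrier VC _ _ sc _ Tne, where tv=3])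
      fix j assume j: "j \<le> c+1" "j \<notin> T"
      show "s j < 3"
      proof (cases "j = c+1 \<or> j = 0")
        case True then show ?thesis using sA s0 by auto
      next
        case False
        then have "1 \<le> j" "j \<le> c" using j by auto
        moreover have "?E j \<inter> A \<noteq> {}" using j(2) \<open>1 \<le> j\<close> \<open>j \<le> c\<close> unfolding T_def by blast
        ultimately show ?thesis using sC1[of j] by simp
      qed
    qed (auto simp: T_def sC)
    also have "\<dots> = 0" 
    proof -
      have "(\<Sum>j\<in>T. \<Sum>t<2*p+2. ?X $$ (j,t) * V1 p $$ (t,0)) = 0"
      proof (rule sum.neutral, rule ballI)
        fix j assume "j \<in> T"
        then have "j \<le> c+1" "j \<noteq> 0" unfolding T_def by auto
        then show "(\<Sum>t<2*p+2. ?X $$ (j,t) * V1 p $$ (t,0)) = 0" using val[of j] by simp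
      qed
      then show ?thesis by simp
    qed
    finally show ?thesis using False by simp
  qed
qed



lemma card_filter_all:
  assumes "finite E" "\<forall>l\<in>E. P l"
  shows "card {l\<in>E. P l} = card E"
  using assms by (metis (mono_tags, lifting) Collect_cong Collect_mem_eq)

lemma card_filter_notall:
  assumes "finite E" "\<not> (\<forall>l\<in>E. P l)"
  shows "card {l\<in>E. P l} < card E"
proof -
  have "{l\<in>E. P l} \<subset> E" using assms(2) by blast
  then show ?thesis using assms(1) by (simp add: psubset_card_mono)
qed

definition V2 :: "nat \<Rightarrow> real mat" where
  "V2 p = mat (2*p+2) 1 (\<lambda>(t,l). if t = 2*p+1 then 1 else if t = 2*p then -1 else 0)"

lemma part2:
  assumes c: "length F = c" and cl: "\<forall>C\<in>set F. clause3 p C" and wA: "wf_litset p A"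
  shows "sat_attn (inputX p F A) (Mq p 0 1 0 (5/2)) (1\<^sub>m (2*p+2)) (V2 p) $$ (c+1, 0)
     = (if refutes F A then 1 else 0)"
proof -
  let ?X = "inputX p F A"
  let ?E = "rowset F A"
  define s where "s = (\<lambda>j. 0 * real (card (?E j \<inter> A)) + 1 * real (card {l\<in>?E j. neg_lit l \<in> A})
      + 0 * real (card (?E j)) + 5/2 * of_bool (j = 0))"
  have sc: "(\<Sum>k<2*p+2. (\<Sum>t<2*p+2. ?X $$ (c+1,t) * Mq p 0 1 0 (5/2) $$ (t,k)) * ?X $$ (j,k)) = s j"
    if "j \<le> c+1" for j
    unfolding s_def by (rule score[OF c that rowset_sub[OF c cl wA]])
  have val: "(\<Sum>t<2*p+2. ?X $$ (j,t) * V2 p $$ (t,0)) = 1 - of_bool (j = 0)" if "j \<le> c+1" for j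
    using that c unfolding sum_split2 by (simp add: X_entry V2_def)
  have s0: "s 0 = 5/2" unfolding s_def by simp
  have sA: "s (c+1) = 0"
  proof -
    have e: "{l\<in>?E (c+1). neg_lit l \<in> A} = {}" by (simp only: rowset_last[OF c] wf_neg_empty[OF wA])
    show ?thesis unfolding s_def e by simp
  qed
  have finE: "finite (?E j)" for j using rowset_sub[OF c cl wA] finite_subset fin_lits by blast
  have sC3: "s j = 3" if "1 \<le> j" "j \<le> c" "\<forall>l\<in>?E j. neg_lit l \<in> A" for j
    unfolding s_def using rowset_card[OF c cl that(1,2)] card_filter_all[OF finE that(3)] that by simp
  have sC2: "s j \<le> 2" if "1 \<le> j" "j \<le> c" "\<not> (\<forall>l\<in>?E j. neg_lit l \<in> A)" for j
  proof -
    have "card {l\<in>?E j. neg_lit l \<in> A} < 3"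
      using rowset_card[OF c cl that(1,2)] card_filter_notall[OF finE that(3)] by simp
    then have "card {l\<in>?E j. neg_lit l \<in> A} \<le> 2" by simp
    then show ?thesis unfolding s_def using that by simp
  qed
  have ref_iff: "refutes F A \<longleftrightarrow> (\<exists>j. 1 \<le> j \<and> j \<le> c \<and> (\<forall>l\<in>?E j. neg_lit l \<in> A))"
  proof
    assume "refutes F A"
    then obtain C where C: "C \<in> set F" "\<forall>l\<in>C. neg_lit l \<in> A" unfolding refutes_def by blast
    then obtain j where "1 \<le> j" "j \<le> c" "C = ?E j" using in_set_rowset[OF c, of C A] by blast
    then show "\<exists>j. 1 \<le> j \<and> j \<le> c \<and> (\<forall>l\<in>?E j. neg_lit l \<in> A)" using C by blast
  next
    assume "\<exists>j. 1 \<le> j \<and> j \<le> c \<and> (\<forall>l\<in>?E j. neg_lit l \<in> A)"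
    then obtain j where j: "1 \<le> j" "j \<le> c" "\<forall>l\<in>?E j. neg_lit l \<in> A" by blast
    then have "?E j \<in> set F" using in_set_rowset[OF c, of "?E j" A] by blast
    then show "refutes F A" unfolding refutes_def using j by blast
  qed
  have XC: "?X \<in> carrier_mat (c+2) (2*p+2)" by (rule X_carrier[OF c])
  have VC: "V2 p \<in> carrier_mat (2*p+2) 1" unfolding V2_def by simp
  show ?thesis
  proof (cases "refutes F A")
    case False
    have "sat_attn ?X (Mq p 0 1 0 (5/2)) (1\<^sub>m (2*p+2)) (V2 p) $$ (c+1, 0)
       = (\<Sum>j\<in>{0}. \<Sum>t<2*p+2. ?X $$ (j,t) * V2 p $$ (t,0)) / real (card {0::nat})"
    proof (rule sat_attn_sel[OF XC Mq_carrier VC _ _ sc, where tv="5/2"])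
      fix j assume j: "j \<le> c+1" "j \<notin> {0}"
      show "s j < 5/2"
      proof (cases "j = c+1")
        case True then show ?thesis using sA by simp
      next
        case False
        then have "1 \<le> j" "j \<le> c" using j by auto
        moreover have "\<not> (\<forall>l\<in>?E j. neg_lit l \<in> A)"
          using ref_iff \<open>\<not> refutes F A\<close> \<open>1 \<le> j\<close> \<open>j \<le> c\<close> by blast
        ultimately show ?thesis using sC2[of j] by simp
      qed
    qed (auto simp: s0)
    then show ?thesis using False val[of 0] by simp
  next
    case True
    define T where "T = {j. 1 \<le> j \<and> j \<le> c \<and> (\<forall>l\<in>?E j. neg_lit l \<in> A)}"
    have Tne: "T \<noteq> {}" using True ref_iff unfolding T_def by auto
    have Tfin: "finite T" unfolding T_def by simp
    have "sat_attn ?X (Mq p 0 1 0 (5/2)) (1\<^sub>m (2*p+2)) (V2 p) $$ (c+1, 0)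
       = (\<Sum>j\<in>T. \<Sum>t<2*p+2. ?X $$ (j,t) * V2 p $$ (t,0)) / real (card T)"
    proof (rule sat_attn_sel[OF XC Mq_carrier VC _ _ sc _ Tne, where tv=3])
      fix j assume j: "j \<le> c+1" "j \<notin> T"
      show "s j < 3"
      proof (cases "j = c+1 \<or> j = 0")
        case True then show ?thesis using sA s0 by auto
      next
        case False
        then have "1 \<le> j" "j \<le> c" using j by auto
        moreover have "\<not> (\<forall>l\<in>?E j. neg_lit l \<in> A)"
          using j(2) \<open>1 \<le> j\<close> \<open>j \<le> c\<close> unfolding T_def by blast
        ultimately show ?thesis using sC2[of j] by simp
      qed
    qed (auto simp: T_def sC3)
    also have "\<dots> = 1"
    proof -
      have "(\<Sum>j\<in>T. \<Sum>t<2*p+2. ?X $$ (j,t) * V2 p $$ (t,0)) = (\<Sum>j\<in>T. 1)"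
      proof (rule sum.cong[OF refl])
        fix j assume "j \<in> T"
        then have "j \<le> c+1" "j \<noteq> 0" unfolding T_def by auto
        then show "(\<Sum>t<2*p+2. ?X $$ (j,t) * V2 p $$ (t,0)) = 1" using val[of j] by simp
      qed
      moreover have "card T > 0" using Tne Tfin by (simp add: card_gt_0_iff)
      ultimately show ?thesis by simp
    qed
    finally show ?thesis using True by simp
  qed
qed



definition V3 :: "nat \<Rightarrow> real mat" where
  "V3 p = mat (2*p+2) (2*p) (\<lambda>(t,l). if t = l then 1 else 0)"

definition unitrow :: "lit set list \<Rightarrow> lit set \<Rightarrow> nat \<Rightarrow> bool" where
  "unitrow F A j \<longleftrightarrow> 1 \<le> j \<and> j \<le> length F \<and> rowset F A j \<inter> A = {}
      \<and> card {l\<in>rowset F A j. neg_lit l \<in> A} = 2"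

lemma part3a:
  assumes c: "length F = c" and cl: "\<forall>C\<in>set F. clause3 p C" and wA: "wf_litset p A"
    and nr: "\<not> refutes F A" and k: "k < 2*p"
  defines "u \<equiv> sat_attn (inputX p F A) (Mq p (-3) 1 0 (3/2)) (1\<^sub>m (2*p+2)) (V3 p) $$ (c+1, k)"
  shows "0 \<le> u \<and> u \<le> 1 \<and> (0 < u \<longleftrightarrow> (\<exists>j. unitrow F A j \<and> litof p k \<in> rowset F A j))
     \<and> (0 < u \<longrightarrow> 1 \<le> real (c+2) * u)"
proof -
  let ?X = "inputX p F A"
  let ?E = "rowset F A"
  define s where "s = (\<lambda>j. (-3) * real (card (?E j \<inter> A)) + 1 * real (card {l\<in>?E j. neg_lit l \<in> A})
      + 0 * real (card (?E j)) + 3/2 * of_bool (j = 0))"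
  have sc: "(\<Sum>k<2*p+2. (\<Sum>t<2*p+2. ?X $$ (c+1,t) * Mq p (-3) 1 0 (3/2) $$ (t,k)) * ?X $$ (j,k)) = s j"
    if "j \<le> c+1" for j
    unfolding s_def by (rule score[OF c that rowset_sub[OF c cl wA]])
  have val: "(\<Sum>t<2*p+2. ?X $$ (j,t) * V3 p $$ (t,k)) = of_bool (litof p k \<in> ?E j)" if "j \<le> c+1" for j
  proof -
    have "(\<Sum>t<2*p+2. ?X $$ (j,t) * V3 p $$ (t,k)) = (\<Sum>t<2*p+2. (if t = k then ?X $$ (j,t) else 0))"
      using k by (intro sum.cong refl) (simp add: V3_def)
    also have "\<dots> = ?X $$ (j,k)" using k by (simp add: sum.delta)
    also have "\<dots> = of_bool (litof p k \<in> ?E j)" using k that c by (simp add: X_entry)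
    finally show ?thesis .
  qed
  have s0: "s 0 = 3/2" unfolding s_def by simp
  have sA: "s (c+1) \<le> 0"
  proof -
    have e: "{l\<in>?E (c+1). neg_lit l \<in> A} = {}" by (simp only: rowset_last[OF c] wf_neg_empty[OF wA])
    show ?thesis unfolding s_def e by simp
  qed
  have finE: "finite (?E j)" for j using rowset_sub[OF c cl wA] finite_subset fin_lits by blast
  have le2: "card {l\<in>?E j. neg_lit l \<in> A} \<le> 2" if "1 \<le> j" "j \<le> c" for j
  proof -
    have "?E j \<in> set F" using in_set_rowset[OF c, of "?E j" A] that by blast
    then have "\<not> (\<forall>l\<in>?E j. neg_lit l \<in> A)" using nr unfolding refutes_def by blast
    then have "card {l\<in>?E j. neg_lit l \<in> A} < card (?E j)"
      by (rule card_filter_notall[OF finE])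
    then have "card {l\<in>?E j. neg_lit l \<in> A} < 3" by (simp only: rowset_card[OF c cl that])
    then show ?thesis by simp
  qed
  have sU: "s j = 2" if "unitrow F A j" for j
  proof -
    have a: "?E j \<inter> A = {}" "card {l\<in>?E j. neg_lit l \<in> A} = 2" "j \<noteq> 0"
      using that unfolding unitrow_def by auto
    show ?thesis unfolding s_def a(1) using a(2,3) by simp
  qed
  have sN: "s j \<le> 1" if "1 \<le> j" "j \<le> c" "\<not> unitrow F A j" for j
  proof (cases "?E j \<inter> A = {}")
    case True
    then have "card {l\<in>?E j. neg_lit l \<in> A} \<noteq> 2" using that c unfolding unitrow_def by auto
    then have "card {l\<in>?E j. neg_lit l \<in> A} \<le> 1" using le2[OF that(1,2)] by simp
    moreover have "j \<noteq> 0" using that by simp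
    ultimately show ?thesis unfolding s_def True by simp
  next
    case False
    have "card (?E j \<inter> A) > 0" using False finE[of j] by (simp add: card_gt_0_iff)
    then have "real (card (?E j \<inter> A)) \<ge> 1" by simp
    moreover have "real (card {l\<in>?E j. neg_lit l \<in> A}) \<le> 2" using le2[OF that(1,2)] by simp
    moreover have "j \<noteq> 0" using that by simp
    ultimately show ?thesis unfolding s_def by simp
  qed
  have XC: "?X \<in> carrier_mat (c+2) (2*p+2)" by (rule X_carrier[OF c])
  have VC: "V3 p \<in> carrier_mat (2*p+2) (2*p)" unfolding V3_def by simp
  show ?thesis
  proof (cases "\<exists>j. unitrow F A j")
    case False
    have "u = (\<Sum>j\<in>{0}. \<Sum>t<2*p+2. ?X $$ (j,t) * V3 p $$ (t,k)) / real (card {0::nat})"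
      unfolding u_def
    proof (rule sat_attn_sel[OF XC Mq_carrier VC _ k sc, where tv="3/2"])
      fix j assume j: "j \<le> c+1" "j \<notin> {0}"
      show "s j < 3/2"
      proof (cases "j = c+1")
        case True then show ?thesis using sA by simp
      next
        case False
        then have "1 \<le> j" "j \<le> c" using j by auto
        moreover have "\<not> unitrow F A j" using \<open>\<not> (\<exists>j. unitrow F A j)\<close> by blast
        ultimately show ?thesis using sN[of j] by simp
      qed
    qed (auto simp: s0)
    then have "u = 0" using val[of 0] by simp
    then show ?thesis using False by simp
  next
    case True
    define T where "T = {j. unitrow F A j}"
    have Tne: "T \<noteq> {}" using True unfolding T_def by auto
    have Tsub: "T \<subseteq> {1..c}" unfolding T_def unitrow_def using c by auto
    have Tfin: "finite T" using Tsub finite_subset by blast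
    have Tcard: "card T \<le> c" using card_mono[OF _ Tsub] by simp
    have Tpos: "card T > 0" using Tne Tfin by (simp add: card_gt_0_iff)
    have "u = (\<Sum>j\<in>T. \<Sum>t<2*p+2. ?X $$ (j,t) * V3 p $$ (t,k)) / real (card T)"
      unfolding u_def
    proof (rule sat_attn_sel[OF XC Mq_carrier VC _ k sc _ Tne, where tv=2])
      show "T \<subseteq> {..c+1}" using Tsub by auto
    next
      fix j assume "j \<in> T" then show "s j = 2" using sU unfolding T_def by auto
    next
      fix j assume j: "j \<le> c+1" "j \<notin> T"
      show "s j < 2"
      proof (cases "j = c+1 \<or> j = 0")
        case True then show ?thesis using sA s0 by auto
      next
        case False
        then have "1 \<le> j" "j \<le> c" using j by auto
        moreover have "\<not> unitrow F A j" using j(2) unfolding T_def by blast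
        ultimately show ?thesis using sN[of j] by simp
      qed
    qed simp
    also have "\<dots> = (\<Sum>j\<in>T. of_bool (litof p k \<in> ?E j)) / real (card T)"
      using Tsub val by (intro arg_cong[where f="\<lambda>x. x / _"] sum.cong refl) auto
    also have "\<dots> = real (card (T \<inter> {j. litof p k \<in> ?E j})) / real (card T)"
      using Tfin by simp
    finally have u: "u = real (card (T \<inter> {j. litof p k \<in> ?E j})) / real (card T)" .
    have le: "card (T \<inter> {j. litof p k \<in> ?E j}) \<le> card T" using Tfin by (simp add: card_mono)
    have iff: "card (T \<inter> {j. litof p k \<in> ?E j}) > 0 \<longleftrightarrow> (\<exists>j. unitrow F A j \<and> litof p k \<in> ?E j)"
    proof -
      have "finite (T \<inter> {j. litof p k \<in> ?E j})" using Tfin by simp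
      then have "card (T \<inter> {j. litof p k \<in> ?E j}) > 0 \<longleftrightarrow> T \<inter> {j. litof p k \<in> ?E j} \<noteq> {}"
        by (simp add: card_gt_0_iff)
      also have "\<dots> \<longleftrightarrow> (\<exists>j. unitrow F A j \<and> litof p k \<in> ?E j)" unfolding T_def by blast
      finally show ?thesis .
    qed
    have "0 \<le> u" unfolding u by simp
    moreover have "u \<le> 1" unfolding u using le Tpos by (simp add: divide_le_eq)
    moreover have "0 < u \<longleftrightarrow> (\<exists>j. unitrow F A j \<and> litof p k \<in> ?E j)"
      unfolding u using Tpos iff by (simp add: zero_less_divide_iff)
    moreover have "1 \<le> real (c+2) * u" if "0 < u"
    proof -
      have "card (T \<inter> {j. litof p k \<in> ?E j}) \<ge> 1" using that iff \<open>0 < u \<longleftrightarrow> _\<close> by simp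
      then have "(c+2) * 1 \<le> (c+2) * card (T \<inter> {j. litof p k \<in> ?E j})" by (rule mult_le_mono2)
      then have "card T \<le> (c+2) * card (T \<inter> {j. litof p k \<in> ?E j})" using Tcard by (metis mult_1_right le_add1 order_trans)
      then have "real (card T) \<le> real (c+2) * real (card (T \<inter> {j. litof p k \<in> ?E j}))"
        by (metis of_nat_le_iff of_nat_mult)
      then show ?thesis unfolding u using Tpos by (simp add: le_divide_eq)
    qed
    ultimately show ?thesis by blast
  qed
qed



lemma card_partition:
  assumes "finite C"
  shows "card {l\<in>C. P l} + card {l\<in>C. \<not> P l} = card C"
proof -
  have "C = {l\<in>C. P l} \<union> {l\<in>C. \<not> P l}" by blast
  moreover have "{l\<in>C. P l} \<inter> {l\<in>C. \<not> P l} = {}" by blast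
  ultimately show ?thesis using assms card_Un_disjoint[of "{l\<in>C. P l}" "{l\<in>C. \<not> P l}"]
    by (metis (no_types, lifting) finite_Un)
qed

lemma unit_iff:
  assumes c: "length F = c" and cl: "\<forall>C\<in>set F. clause3 p C" and wA: "wf_litset p A"
  shows "unit_implies F A m \<longleftrightarrow> neg_lit m \<notin> A \<and> (\<exists>j. unitrow F A j \<and> m \<in> rowset F A j)"
proof
  assume "unit_implies F A m"
  then obtain C where C: "C \<in> set F" "\<not> (\<exists>l'\<in>C. l' \<in> A)" "{l'\<in>C. neg_lit l' \<notin> A} = {m}"
    unfolding unit_implies_def by blast
  then obtain j where j: "1 \<le> j" "j \<le> c" "C = rowset F A j" using in_set_rowset[OF c, of C A] by blast
  have fin: "finite C" using j rowset_sub[OF c cl wA] finite_subset fin_lits by metis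
  have c3: "card C = 3" using rowset_card[OF c cl j(1,2)] j(3) by simp
  have "card {l\<in>C. neg_lit l \<in> A} + card {l\<in>C. \<not> neg_lit l \<in> A} = card C" by (rule card_partition[OF fin])
  then have "card {l\<in>C. neg_lit l \<in> A} = 2" using C(3) c3 by simp
  moreover have "C \<inter> A = {}" using C(2) by blast
  ultimately have "unitrow F A j" unfolding unitrow_def using j c by simp
  moreover have "m \<in> C" "neg_lit m \<notin> A" using C(3) by blast+
  ultimately show "neg_lit m \<notin> A \<and> (\<exists>j. unitrow F A j \<and> m \<in> rowset F A j)" using j(3) by blast
next
  assume "neg_lit m \<notin> A \<and> (\<exists>j. unitrow F A j \<and> m \<in> rowset F A j)"
  then obtain j where j: "unitrow F A j" "m \<in> rowset F A j" "neg_lit m \<notin> A" by blast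
  let ?C = "rowset F A j"
  have j1: "1 \<le> j" "j \<le> c" using j(1) c unfolding unitrow_def by auto
  have inF: "?C \<in> set F" using in_set_rowset[OF c, of ?C A] j1 by blast
  have fin: "finite ?C" using rowset_sub[OF c cl wA] finite_subset fin_lits by metis
  have c3: "card ?C = 3" by (rule rowset_card[OF c cl j1])
  have c2: "card {l\<in>?C. neg_lit l \<in> A} = 2" using j(1) unfolding unitrow_def by simp
  have "card {l\<in>?C. neg_lit l \<in> A} + card {l\<in>?C. \<not> neg_lit l \<in> A} = card ?C" by (rule card_partition[OF fin])
  then have "card {l\<in>?C. neg_lit l \<notin> A} = 1" using c2 c3 by simp
  then obtain x where x: "{l\<in>?C. neg_lit l \<notin> A} = {x}" by (metis card_1_singletonE)
  have "m \<in> {l\<in>?C. neg_lit l \<notin> A}" using j(2,3) by blast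
  then have "m = x" using x by auto
  then have "{l\<in>?C. neg_lit l \<notin> A} = {m}" using x by simp
  moreover have "\<not> (\<exists>l'\<in>?C. l' \<in> A)" using j(1) unfolding unitrow_def by blast
  ultimately show "unit_implies F A m" unfolding unit_implies_def using inF by blast
qed

definition W1m :: "nat \<Rightarrow> real mat" where "W1m p = 0\<^sub>m (4*p) (2*p+(2*p+2))"
definition b1v :: "nat \<Rightarrow> real vec" where "b1v p = vec (4*p) (\<lambda>_. 1)"
definition Vgm :: "nat \<Rightarrow> nat \<Rightarrow> real mat" where
  "Vgm p c = mat (4*p) (2*p+(2*p+2)) (\<lambda>(t,i).
      if i = (if t < 2*p then t else t - 2*p) then real (c+2)
      else if i = 2*p + swp p (if t < 2*p then t else t - 2*p) then - real (c+2) else 0)"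
definition b2v :: "nat \<Rightarrow> real vec" where "b2v p = vec (4*p) (\<lambda>t. if t < 2*p then 0 else -1)"
definition W2m :: "nat \<Rightarrow> real mat" where
  "W2m p = mat (2*p) (4*p) (\<lambda>(k,t). if t = k then 1 else if t = k + 2*p then -1 else 0)"

lemma mlp_entry:
  assumes x: "dim_vec x = 2*p+(2*p+2)" and k: "k < 2*p"
  shows "reglu_mlp (W1m p) (b1v p) (Vgm p c) (b2v p) (W2m p) (0\<^sub>v (2*p)) x $ k
     = max 0 (real (c+2) * x$k - real (c+2) * x$(2*p + swp p k))
       - max 0 (real (c+2) * x$k - real (c+2) * x$(2*p + swp p k) - 1)"
proof -
  let ?K = "real (c+2)"
  define hv where "hv = vec (dim_row (W1m p)) (\<lambda>t. (W1m p *\<^sub>v x + b1v p) $ t * max 0 ((Vgm p c *\<^sub>v x + b2v p) $ t))"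
  have dh: "dim_vec hv = 4*p" unfolding hv_def W1m_def by simp
  have hv: "hv $ t = max 0 (?K * x $ t' - ?K * x $ (2*p + swp p t') + (if t < 2*p then 0 else -1))"
    if t: "t < 4*p" and t': "t' = (if t < 2*p then t else t - 2*p)" for t t'
  proof -
    have t'l: "t' < 2*p" using t t' by auto
    have w1: "(W1m p *\<^sub>v x) $ t = 0" using t x unfolding W1m_def by (simp add: scalar_prod_def)
    have "(Vgm p c *\<^sub>v x) $ t = (\<Sum>i<2*p+(2*p+2). (if i = t' then ?K else if i = 2*p + swp p t' then - ?K else 0) * x $ i)"
      using t x unfolding Vgm_def t' by (simp add: scalar_prod_def atLeast0LessThan)
    also have "\<dots> = ?K * x $ t' - ?K * x $ (2*p + swp p t')"
      using t'l swp_lt[OF t'l] by (subst sum_two) (auto simp: algebra_simps)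
    finally have vg: "(Vgm p c *\<^sub>v x) $ t = ?K * x $ t' - ?K * x $ (2*p + swp p t')" .
    show ?thesis unfolding hv_def using t w1 vg by (simp add: W1m_def b1v_def b2v_def)
  qed
  have "reglu_mlp (W1m p) (b1v p) (Vgm p c) (b2v p) (W2m p) (0\<^sub>v (2*p)) x $ k = (W2m p *\<^sub>v hv) $ k"
    unfolding reglu_mlp_def hv_def[symmetric] using k by (simp add: W2m_def)
  also have "\<dots> = (\<Sum>t<4*p. (if t = k then 1 else if t = k + 2*p then -1 else 0) * hv $ t)"
    using k dh unfolding W2m_def by (simp add: scalar_prod_def atLeast0LessThan)
  also have "\<dots> = hv $ k - hv $ (k + 2*p)"
    using k by (subst sum_two) auto
  also have "\<dots> = max 0 (?K * x$k - ?K * x$(2*p + swp p k))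
       - max 0 (?K * x$k - ?K * x$(2*p + swp p k) - 1)"
    using k by (simp add: hv)
  finally show ?thesis .
qed

lemma relu_arith:
  fixes u K :: real
  assumes "0 \<le> u" "u \<le> 1" "K > 0" "0 < u \<Longrightarrow> 1 \<le> K * u"
  shows "max 0 (K * u - K * of_bool P) - max 0 (K * u - K * of_bool P - 1) = of_bool (\<not> P \<and> 0 < u)"
proof (cases P)
  case True
  have "K * u \<le> K * 1" using assms by (intro mult_left_mono) auto
  then show ?thesis using True by simp
next
  case False
  show ?thesis
  proof (cases "0 < u")
    case True then show ?thesis using False assms by simp
  next
    case f2: False then have "u = 0" using assms by simp
    then show ?thesis using False by simp
  qed
qed



lemma part3:
  assumes c: "length F = c" and cl: "\<forall>C\<in>set F. clause3 p C" and wA: "wf_litset p A"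
    and nr: "\<not> refutes F A"
  shows "reglu_mlp (W1m p) (b1v p) (Vgm p c) (b2v p) (W2m p) (0\<^sub>v (2*p))
      (row (hconcat (sat_attn (inputX p F A) (Mq p (-3) 1 0 (3/2)) (1\<^sub>m (2*p+2)) (V3 p)) (inputX p F A)) (c + 1))
    = enc p {l \<in> lits p. unit_implies F A l}"
proof -
  let ?X = "inputX p F A"
  let ?Att = "sat_attn ?X (Mq p (-3) 1 0 (3/2)) (1\<^sub>m (2*p+2)) (V3 p)"
  let ?x = "row (hconcat ?Att ?X) (c + 1)"
  have XC: "?X \<in> carrier_mat (c+2) (2*p+2)" by (rule X_carrier[OF c])
  have dA: "dim_row ?Att = c+2" "dim_col ?Att = 2*p" using XC unfolding sat_attn_def Let_def V3_def by auto
  have dH: "dim_row (hconcat ?Att ?X) = c+2" "dim_col (hconcat ?Att ?X) = 2*p+(2*p+2)"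
    using dA XC unfolding hconcat_def by auto
  have dx: "dim_vec ?x = 2*p+(2*p+2)" using dH by simp
  show ?thesis
  proof (rule eq_vecI)
    show "dim_vec (reglu_mlp (W1m p) (b1v p) (Vgm p c) (b2v p) (W2m p) (0\<^sub>v (2*p)) ?x)
        = dim_vec (enc p {l \<in> lits p. unit_implies F A l})"
      unfolding reglu_mlp_def enc_def by simp
  next
    fix k assume "k < dim_vec (enc p {l \<in> lits p. unit_implies F A l})"
    then have k: "k < 2*p" unfolding enc_def by simp
    define u where "u = ?Att $$ (c+1, k)"
    have xk: "?x $ k = u" unfolding u_def using dH dA XC k unfolding hconcat_def by simp
    have xs: "?x $ (2*p + swp p k) = of_bool (neg_lit (litof p k) \<in> A)"
    proof -
      have "?x $ (2*p + swp p k) = ?X $$ (c+1, swp p k)"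
        using dH dA XC k swp_lt[OF k] unfolding hconcat_def by simp
      also have "\<dots> = of_bool (litof p (swp p k) \<in> A)"
        using X_entry[of "c+1" F "swp p k" p A] swp_lt[OF k] c by (simp add: rowset_def)
      finally show ?thesis using litof_swp[OF k] by simp
    qed
    have P: "0 \<le> u \<and> u \<le> 1 \<and> (0 < u \<longleftrightarrow> (\<exists>j. unitrow F A j \<and> litof p k \<in> rowset F A j))
       \<and> (0 < u \<longrightarrow> 1 \<le> real (c+2) * u)"
      unfolding u_def by (rule part3a[OF c cl wA nr k])
    have "reglu_mlp (W1m p) (b1v p) (Vgm p c) (b2v p) (W2m p) (0\<^sub>v (2*p)) ?x $ k
        = max 0 (real (c+2) * u - real (c+2) * of_bool (neg_lit (litof p k) \<in> A))
          - max 0 (real (c+2) * u - real (c+2) * of_bool (neg_lit (litof p k) \<in> A) - 1)"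
      using mlp_entry[OF dx k, of c] xk xs by simp
    also have "\<dots> = of_bool (\<not> neg_lit (litof p k) \<in> A \<and> 0 < u)"
      by (rule relu_arith) (use P in auto)
    also have "\<dots> = of_bool (unit_implies F A (litof p k))"
      using unit_iff[OF c cl wA, of "litof p k"] P by auto
    also have "\<dots> = enc p {l \<in> lits p. unit_implies F A l} $ k"
      using enc_idx[OF k] litof_in[OF k] by simp
    finally show "reglu_mlp (W1m p) (b1v p) (Vgm p c) (b2v p) (W2m p) (0\<^sub>v (2*p)) ?x $ k
        = enc p {l \<in> lits p. unit_implies F A l} $ k" .
  qed
qed

theorem mainTheorem3:
  fixes p c :: nat
  shows "\<exists>(d1::nat) (WQ1::real mat) WK1 WV1 (d2::nat) (WQ2::real mat) WK2 WV2
           (d3::nat) (WQ3::real mat) WK3 WV3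
           (h::nat) (W1::real mat) (b1::real vec) (Vg::real mat) (b2::real vec)
           (W2::real mat) (b::real vec).
     WQ1 \<in> carrier_mat (2 * p + 2) d1 \<and> WK1 \<in> carrier_mat (2 * p + 2) d1 \<and>
     WV1 \<in> carrier_mat (2 * p + 2) 1 \<and>
     WQ2 \<in> carrier_mat (2 * p + 2) d2 \<and> WK2 \<in> carrier_mat (2 * p + 2) d2 \<and>
     WV2 \<in> carrier_mat (2 * p + 2) 1 \<and>
     WQ3 \<in> carrier_mat (2 * p + 2) d3 \<and> WK3 \<in> carrier_mat (2 * p + 2) d3 \<and>
     WV3 \<in> carrier_mat (2 * p + 2) (2 * p) \<and>
     W1 \<in> carrier_mat h (2 * p + (2 * p + 2)) \<and> b1 \<in> carrier_vec h \<and>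
     Vg \<in> carrier_mat h (2 * p + (2 * p + 2)) \<and> b2 \<in> carrier_vec h \<and>
     W2 \<in> carrier_mat (2 * p) h \<and> b \<in> carrier_vec (2 * p) \<and>
     (\<forall>F A. length F = c \<longrightarrow> (\<forall>C\<in>set F. clause3 p C) \<longrightarrow> wf_litset p A \<longrightarrow>
        sat_attn (inputX p F A) WQ1 WK1 WV1 $$ (c + 1, 0) = (if sat_models A F then 1 else 0) \<and>
        sat_attn (inputX p F A) WQ2 WK2 WV2 $$ (c + 1, 0) = (if refutes F A then 1 else 0) \<and>
        (\<not> refutes F A \<longrightarrow>
           reglu_mlp W1 b1 Vg b2 W2 b
             (row (hconcat (sat_attn (inputX p F A) WQ3 WK3 WV3) (inputX p F A)) (c + 1))
           = enc p {l \<in> lits p. unit_implies F A l}))"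
proof -
  have main: "\<forall>F A. length F = c \<longrightarrow> (\<forall>C\<in>set F. clause3 p C) \<longrightarrow> wf_litset p A \<longrightarrow>
        sat_attn (inputX p F A) (Mq p (-2) 0 1 2) (1\<^sub>m (2*p+2)) (V1 p) $$ (c + 1, 0) = (if sat_models A F then 1 else 0) \<and>
        sat_attn (inputX p F A) (Mq p 0 1 0 (5/2)) (1\<^sub>m (2*p+2)) (V2 p) $$ (c + 1, 0) = (if refutes F A then 1 else 0) \<and>
        (\<not> refutes F A \<longrightarrow>
           reglu_mlp (W1m p) (b1v p) (Vgm p c) (b2v p) (W2m p) (0\<^sub>v (2*p))
             (row (hconcat (sat_attn (inputX p F A) (Mq p (-3) 1 0 (3/2)) (1\<^sub>m (2*p+2)) (V3 p)) (inputX p F A)) (c + 1))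
           = enc p {l \<in> lits p. unit_implies F A l})"
    using part1 part2 part3 by blast
  have cars: "Mq p (-2) 0 1 2 \<in> carrier_mat (2 * p + 2) (2*p+2)" "1\<^sub>m (2*p+2) \<in> carrier_mat (2 * p + 2) (2*p+2)"
    "V1 p \<in> carrier_mat (2 * p + 2) 1"
    "Mq p 0 1 0 (5/2) \<in> carrier_mat (2 * p + 2) (2*p+2)" "V2 p \<in> carrier_mat (2 * p + 2) 1"
    "Mq p (-3) 1 0 (3/2) \<in> carrier_mat (2 * p + 2) (2*p+2)" "V3 p \<in> carrier_mat (2 * p + 2) (2*p)"
    "W1m p \<in> carrier_mat (4*p) (2 * p + (2 * p + 2))" "b1v p \<in> carrier_vec (4*p)"
    "Vgm p c \<in> carrier_mat (4*p) (2 * p + (2 * p + 2))" "b2v p \<in> carrier_vec (4*p)"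
    "W2m p \<in> carrier_mat (2 * p) (4*p)" "(0\<^sub>v (2*p) :: real vec) \<in> carrier_vec (2 * p)"
    by (simp_all add: Mq_carrier[simplified] V1_def V2_def V3_def W1m_def b1v_def Vgm_def b2v_def W2m_def)
  show ?thesis
    apply (rule exI[of _ "2*p+2"], rule exI[of _ "Mq p (-2) 0 1 2"], rule exI[of _ "1\<^sub>m (2*p+2)"], rule exI[of _ "V1 p"])
    apply (rule exI[of _ "2*p+2"], rule exI[of _ "Mq p 0 1 0 (5/2)"], rule exI[of _ "1\<^sub>m (2*p+2)"], rule exI[of _ "V2 p"])
    apply (rule exI[of _ "2*p+2"], rule exI[of _ "Mq p (-3) 1 0 (3/2)"], rule exI[of _ "1\<^sub>m (2*p+2)"], rule exI[of _ "V3 p"])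
    apply (rule exI[of _ "4*p"], rule exI[of _ "W1m p"], rule exI[of _ "b1v p"], rule exI[of _ "Vgm p c"],
           rule exI[of _ "b2v p"], rule exI[of _ "W2m p"], rule exI[of _ "0\<^sub>v (2*p)"])
    using cars main by (intro conjI) (assumption | blast)+
qed

end
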